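(* Let $S\subseteq\mathbb{N}^k$. If $S$ is denoted by some resimple expression, then $S$ is a recognizable subset of $\mathbb{N}^k$.
   Context: $\mathbb{N}$ includes $0$; $\mathbf{e}_j$ is the $j$-th unit vector of $\mathbb{N}^k$. For finite $B\subseteq\mathbb{N}^k$, $B^\oplus$ is the set of $\mathbb{N}$-linear combinations of elements of $B$, and $\gamma+B^\oplus=\{\gamma+\sigma:\sigma\in B^\oplus\}$. $B$ is a free basis if every element of $B^\oplus$ has a unique representation as an $\mathbb{N}$-linear combination of elements of $B$. An element is primary if it equals $n\mathbf{e}_j$ with $n>0$. An atomic resimple expression is $\gamma+B^\oplus$ with $\gamma\in\mathbb{N}^k$ and $B$ a free basis all of whose elements are primary. Resimple expressions are built inductively: atomic resimple expressions are resimple, and if $E,F$ are resimple then so are $E\cup F$, $E\cap F$ and $E^c$ (complement in $\mathbb{N}^k$), with the obvious set semantics. With $A=\{a_1,\dots,a_k\}$ and $\varphi:A^*\to\mathbb{N}^k$, $\varphi(w)=(|w|_{a_1},\dots,|w|_{a_k})$ ($|w|_a$ = number of occurrences of $a$ in $w$), a set $S\subseteq\mathbb{N}^k$ is recognizable if $\varphi^{-1}(S)$ is a regular language. *)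

theory Defs
  imports Main
begin

(* Vectors of N^k are represented as functions nat => nat vanishing from index k on. *)
definition Nk :: "nat \<Rightarrow> (nat \<Rightarrow> nat) set" where
  "Nk k = {v. \<forall>j\<ge>k. v j = 0}"

definition unitvec :: "nat \<Rightarrow> nat \<Rightarrow> nat" where
  "unitvec j = (\<lambda>i. if i = j then 1 else 0)"

definition lincomb :: "((nat \<Rightarrow> nat) \<Rightarrow> nat) \<Rightarrow> (nat \<Rightarrow> nat) set \<Rightarrow> nat \<Rightarrow> nat" where
  "lincomb c B = (\<lambda>i. \<Sum>b\<in>B. c b * b i)"

definition span_N :: "(nat \<Rightarrow> nat) set \<Rightarrow> (nat \<Rightarrow> nat) set" where
  "span_N B = {lincomb c B | c. True}"

definition free_basis :: "(nat \<Rightarrow> nat) set \<Rightarrow> bool" where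
  "free_basis B \<longleftrightarrow> finite B \<and>
     (\<forall>c c'. lincomb c B = lincomb c' B \<longrightarrow> (\<forall>b\<in>B. c b = c' b))"

definition primary :: "nat \<Rightarrow> (nat \<Rightarrow> nat) \<Rightarrow> bool" where
  "primary k v \<longleftrightarrow> (\<exists>n j. n > 0 \<and> j < k \<and> v = (\<lambda>i. n * unitvec j i))"

datatype rexpr = Atom "nat \<Rightarrow> nat" "(nat \<Rightarrow> nat) set"
  | RUn rexpr rexpr | RInt rexpr rexpr | RCompl rexpr

fun resimple :: "nat \<Rightarrow> rexpr \<Rightarrow> bool" where
  "resimple k (Atom \<gamma> B) \<longleftrightarrow> \<gamma> \<in> Nk k \<and> free_basis B \<and> (\<forall>b\<in>B. primary k b)"
| "resimple k (RUn E F) \<longleftrightarrow> resimple k E \<and> resimple k F"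
| "resimple k (RInt E F) \<longleftrightarrow> resimple k E \<and> resimple k F"
| "resimple k (RCompl E) \<longleftrightarrow> resimple k E"

fun rsem :: "nat \<Rightarrow> rexpr \<Rightarrow> (nat \<Rightarrow> nat) set" where
  "rsem k (Atom \<gamma> B) = {(\<lambda>i. \<gamma> i + \<sigma> i) | \<sigma>. \<sigma> \<in> span_N B}"
| "rsem k (RUn E F) = rsem k E \<union> rsem k F"
| "rsem k (RInt E F) = rsem k E \<inter> rsem k F"
| "rsem k (RCompl E) = Nk k - rsem k E"

(* Regular languages over the alphabet {0..<k} (letter i stands for a_(i+1)) *)
definition conc :: "'a list set \<Rightarrow> 'a list set \<Rightarrow> 'a list set" where
  "conc L M = {u @ v | u v. u \<in> L \<and> v \<in> M}"

inductive_set star_lang :: "'a list set \<Rightarrow> 'a list set" for L where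
  star_nil: "[] \<in> star_lang L"
| star_app: "u \<in> L \<Longrightarrow> v \<in> star_lang L \<Longrightarrow> u @ v \<in> star_lang L"

inductive regular :: "nat \<Rightarrow> nat list set \<Rightarrow> bool" for k where
  reg_empty: "regular k {}"
| reg_eps: "regular k {[]}"
| reg_letter: "a < k \<Longrightarrow> regular k {[a]}"
| reg_union: "regular k L \<Longrightarrow> regular k M \<Longrightarrow> regular k (L \<union> M)"
| reg_conc: "regular k L \<Longrightarrow> regular k M \<Longrightarrow> regular k (conc L M)"
| reg_star: "regular k L \<Longrightarrow> regular k (star_lang L)"

definition parikh :: "nat \<Rightarrow> nat list \<Rightarrow> nat \<Rightarrow> nat" where
  "parikh k w = (\<lambda>i. if i < k then count_list w i else 0)"

definition recognizable :: "nat \<Rightarrow> (nat \<Rightarrow> nat) set \<Rightarrow> bool" where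
  "recognizable k S \<longleftrightarrow> regular k {w \<in> lists {..<k}. parikh k w \<in> S}"

end

theory Submission
  imports Defs
begin

lemma regular_Union:
  assumes "finite A" "\<forall>L\<in>A. regular k L" shows "regular k (\<Union>A)"
  using assms by (induction A rule: finite_induct) (auto intro: regular.intros)

definition Rp :: "nat \<Rightarrow> ('s \<Rightarrow> nat \<Rightarrow> 's) \<Rightarrow> 's set \<Rightarrow> 's \<Rightarrow> 's \<Rightarrow> nat list set" where
  "Rp k d X p q = {w \<in> lists {..<k}. foldl d p w = q \<and>
      (\<forall>u v. w = u @ v \<and> u \<noteq> [] \<and> v \<noteq> [] \<longrightarrow> foldl d p u \<in> X)}"

lemma Rp_nil: "[] \<in> Rp k d X p p"
  unfolding Rp_def by auto

lemma Rp_app: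
  assumes u: "u \<in> Rp k d Y p r" and v: "v \<in> Rp k d Y r q" and r: "r \<in> Y"
  shows "u @ v \<in> Rp k d Y p q"
proof -
  have fu: "foldl d p u = r" and lu: "u \<in> lists {..<k}"
    and cu: "\<And>x y. u = x @ y \<Longrightarrow> x \<noteq> [] \<Longrightarrow> y \<noteq> [] \<Longrightarrow> foldl d p x \<in> Y"
    using u unfolding Rp_def by auto
  have fv: "foldl d r v = q" and lv: "v \<in> lists {..<k}"
    and cv: "\<And>x y. v = x @ y \<Longrightarrow> x \<noteq> [] \<Longrightarrow> y \<noteq> [] \<Longrightarrow> foldl d r x \<in> Y"
    using v unfolding Rp_def by auto
  have "foldl d p x \<in> Y" if h: "u @ v = x @ y" "x \<noteq> []" "y \<noteq> []" for x y
  proof -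
    from h(1) obtain us where "(u = x @ us \<and> us @ v = y) \<or> (u @ us = x \<and> v = us @ y)"
      by (auto simp: append_eq_append_conv2)
    then show ?thesis
    proof
      assume a: "u = x @ us \<and> us @ v = y"
      show ?thesis
      proof (cases "us = []")
        case True then show ?thesis using a fu r by simp
      next
        case False then show ?thesis using a cu h by blast
      qed
    next
      assume a: "u @ us = x \<and> v = us @ y"
      show ?thesis
      proof (cases "us = []")
        case True then show ?thesis using a fu r by auto
      next
        case False
        then have "foldl d r us \<in> Y" using a cv h by blast
        then show ?thesis using a fu by auto
      qed
    qed
  qed
  then show ?thesis using fu fv lu lv unfolding Rp_def by auto
qed

lemma Rp_mono: "X \<subseteq> Y \<Longrightarrow> Rp k d X p q \<subseteq> Rp k d Y p q"
  unfolding Rp_def by blast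

lemma Rp_star:
  assumes "w \<in> star_lang (Rp k d Y r r)" "r \<in> Y" shows "w \<in> Rp k d Y r r"
  using assms by (induction w rule: star_lang.induct) (auto intro: Rp_nil Rp_app)

lemma Rp_first:
  assumes w: "w \<in> Rp k d (insert r X) p q"
    and ex: "\<exists>x y. w = x @ y \<and> x \<noteq> [] \<and> y \<noteq> [] \<and> foldl d p x = r"
  shows "\<exists>u v. w = u @ v \<and> u \<noteq> [] \<and> v \<noteq> [] \<and> u \<in> Rp k d X p r \<and> v \<in> Rp k d (insert r X) r q"
proof -
  have fw: "foldl d p w = q" and lw: "w \<in> lists {..<k}"
    and cw: "\<And>x y. w = x @ y \<Longrightarrow> x \<noteq> [] \<Longrightarrow> y \<noteq> [] \<Longrightarrow> foldl d p x \<in> insert r X"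
    using w unfolding Rp_def by auto
  define P where "P n \<longleftrightarrow> 0 < n \<and> n < length w \<and> foldl d p (take n w) = r" for n
  from ex obtain x y where xy: "w = x @ y" "x \<noteq> []" "y \<noteq> []" "foldl d p x = r" by blast
  have "P (length x)" using xy unfolding P_def by auto
  define n where "n = (LEAST n. P n)"
  have Pn: "P n" unfolding n_def using \<open>P (length x)\<close> by (rule LeastI)
  have minn: "\<And>m. m < n \<Longrightarrow> \<not> P m" unfolding n_def using not_less_Least by blast
  define u where "u = take n w"
  define v where "v = drop n w"
  have wuv: "w = u @ v" unfolding u_def v_def by simp
  have lu: "u \<in> lists {..<k}" "v \<in> lists {..<k}" using lw wuv by auto
  have un: "u \<noteq> []" "v \<noteq> []" "length u = n" using Pn unfolding P_def u_def v_def by auto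
  have fu: "foldl d p u = r" using Pn unfolding P_def u_def by auto
  have "u \<in> Rp k d X p r"
  proof -
    have "foldl d p x' \<in> X" if h: "u = x' @ y'" "x' \<noteq> []" "y' \<noteq> []" for x' y'
    proof -
      have "w = x' @ (y' @ v)" using h wuv by simp
      then have A: "foldl d p x' \<in> insert r X" using cw h by blast
      have lx: "0 < length x'" "length x' < n" using h un by auto
      then have "\<not> P (length x')" using minn by blast
      moreover have "take (length x') w = x'" using \<open>w = x' @ (y' @ v)\<close> by simp
      ultimately have "foldl d p x' \<noteq> r" using lx un wuv unfolding P_def by auto
      then show ?thesis using A by auto
    qed
    then show ?thesis using fu lu unfolding Rp_def by auto
  qed
  moreover have "v \<in> Rp k d (insert r X) r q"
  proof -
    have "foldl d r x' \<in> insert r X" if h: "v = x' @ y'" "x' \<noteq> []" "y' \<noteq> []" for x' y'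
    proof -
      have "w = (u @ x') @ y'" using h wuv by simp
      then have "foldl d p (u @ x') \<in> insert r X" using cw h by blast
      then show ?thesis using fu by simp
    qed
    moreover have "foldl d r v = q" using fw fu wuv by simp
    ultimately show ?thesis using lu unfolding Rp_def by auto
  qed
  ultimately show ?thesis using wuv un by blast
qed

lemma Rp_noVisit:
  assumes w: "w \<in> Rp k d (insert r X) p q"
    and nex: "\<not> (\<exists>x y. w = x @ y \<and> x \<noteq> [] \<and> y \<noteq> [] \<and> foldl d p x = r)"
  shows "w \<in> Rp k d X p q"
proof -
  have "foldl d p x \<in> X" if "w = x @ y" "x \<noteq> []" "y \<noteq> []" for x y
  proof -
    have "foldl d p x \<in> insert r X" using w that unfolding Rp_def by blast
    moreover have "foldl d p x \<noteq> r" using nex that by blast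
    ultimately show ?thesis by blast
  qed
  then show ?thesis using w unfolding Rp_def by blast
qed

lemma Rp_loop:
  "v \<in> Rp k d (insert r X) r q \<Longrightarrow> v \<in> conc (star_lang (Rp k d X r r)) (Rp k d X r q)"
proof (induction "length v" arbitrary: v rule: less_induct)
  case less
  show ?case
  proof (cases "\<exists>x y. v = x @ y \<and> x \<noteq> [] \<and> y \<noteq> [] \<and> foldl d r x = r")
    case True
    from Rp_first[OF less.prems True] obtain u v' where
      h: "v = u @ v'" "u \<noteq> []" "v' \<noteq> []" "u \<in> Rp k d X r r" "v' \<in> Rp k d (insert r X) r q"
      by blast
    have "length v' < length v" using h by simp
    then have "v' \<in> conc (star_lang (Rp k d X r r)) (Rp k d X r q)" using less h by blast
    then obtain s t where st: "v' = s @ t" "s \<in> star_lang (Rp k d X r r)" "t \<in> Rp k d X r q"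
      unfolding conc_def by blast
    have "u @ s \<in> star_lang (Rp k d X r r)" using h(4) st(2) by (rule star_app)
    moreover have "v = (u @ s) @ t" using h st by simp
    ultimately show ?thesis using st(3) unfolding conc_def by blast
  next
    case False
    have "v \<in> Rp k d X r q" by (rule Rp_noVisit[OF less.prems False])
    moreover have "v = [] @ v" by simp
    ultimately show ?thesis unfolding conc_def using star_nil by blast
  qed
qed

lemma Rp_insert:
  assumes "r \<notin> X"
  shows "Rp k d (insert r X) p q = Rp k d X p q \<union>
     conc (Rp k d X p r) (conc (star_lang (Rp k d X r r)) (Rp k d X r q))"
proof
  show "Rp k d (insert r X) p q \<subseteq> Rp k d X p q \<union>
     conc (Rp k d X p r) (conc (star_lang (Rp k d X r r)) (Rp k d X r q))"
  proof
    fix w assume w: "w \<in> Rp k d (insert r X) p q"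
    show "w \<in> Rp k d X p q \<union>
     conc (Rp k d X p r) (conc (star_lang (Rp k d X r r)) (Rp k d X r q))"
    proof (cases "\<exists>x y. w = x @ y \<and> x \<noteq> [] \<and> y \<noteq> [] \<and> foldl d p x = r")
      case True
      from Rp_first[OF w True] obtain u v where
        h: "w = u @ v" "u \<in> Rp k d X p r" "v \<in> Rp k d (insert r X) r q" by blast
      from Rp_loop[OF h(3)] have "v \<in> conc (star_lang (Rp k d X r r)) (Rp k d X r q)" .
      with h(1,2) have "w \<in> conc (Rp k d X p r) (conc (star_lang (Rp k d X r r)) (Rp k d X r q))"
        unfolding conc_def by blast
      then show ?thesis by blast
    next
      case False
      have "w \<in> Rp k d X p q" by (rule Rp_noVisit[OF w False])
      then show ?thesis by blast
    qed
  qed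
next
  let ?Y = "insert r X"
  have m: "\<And>a b. Rp k d X a b \<subseteq> Rp k d ?Y a b" by (rule Rp_mono) auto
  have "w \<in> Rp k d ?Y p q" if "w \<in> conc (Rp k d X p r) (conc (star_lang (Rp k d X r r)) (Rp k d X r q))" for w
  proof -
    from that obtain a s t where h: "w = a @ (s @ t)" "a \<in> Rp k d X p r"
      "s \<in> star_lang (Rp k d X r r)" "t \<in> Rp k d X r q" unfolding conc_def by blast
    have "star_lang (Rp k d X r r) \<subseteq> star_lang (Rp k d ?Y r r)"
    proof
      fix x assume "x \<in> star_lang (Rp k d X r r)"
      then show "x \<in> star_lang (Rp k d ?Y r r)"
        by (induction x rule: star_lang.induct) (use m in \<open>auto intro: star_lang.intros\<close>)
    qed
    then have s: "s \<in> Rp k d ?Y r r" using h(3) Rp_star[of s k d ?Y r] by blast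
    have t: "t \<in> Rp k d ?Y r q" using h(4) m by blast
    have a: "a \<in> Rp k d ?Y p r" using h(2) m by blast
    have "s @ t \<in> Rp k d ?Y r q" using Rp_app[OF s t] by simp
    then show ?thesis using Rp_app[OF a] h(1) by simp
  qed
  then show "Rp k d X p q \<union> conc (Rp k d X p r) (conc (star_lang (Rp k d X r r)) (Rp k d X r q))
      \<subseteq> Rp k d ?Y p q" using m by blast
qed

lemma Rp_empty:
  "Rp k d {} p q = (if p = q then {[]} else {}) \<union> (\<Union>a\<in>{a. a < k \<and> d p a = q}. {[a]})"
proof -
  have "length w \<le> 1" if "w \<in> Rp k d {} p q" for w
  proof (rule ccontr)
    assume "\<not> length w \<le> 1"
    then obtain a b w' where "w = a # b # w'" by (cases w; cases "tl w") auto
    then have "w = [a] @ (b # w')" by simp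
    then show False using that unfolding Rp_def by blast
  qed
  have "w \<in> (if p = q then {[]} else {}) \<union> (\<Union>a\<in>{a. a < k \<and> d p a = q}. {[a]})"
    if w: "w \<in> Rp k d {} p q" for w
  proof (cases w)
    case Nil then show ?thesis using w by (auto simp: Rp_def)
  next
    case (Cons a w')
    then have "w' = []" using \<open>w \<in> Rp k d {} p q \<Longrightarrow> length w \<le> 1\<close> w by auto
    then show ?thesis using w Cons by (auto simp: Rp_def)
  qed
  then have "Rp k d {} p q \<subseteq> (if p = q then {[]} else {}) \<union> (\<Union>a\<in>{a. a < k \<and> d p a = q}. {[a]})"
    by blast
  moreover have "(if p = q then {[]} else {}) \<union> (\<Union>a\<in>{a. a < k \<and> d p a = q}. {[a]}) \<subseteq> Rp k d {} p q"
    by (auto simp: Rp_def Cons_eq_append_conv)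
  ultimately show ?thesis by blast
qed

lemma Rp_regular: "finite X \<Longrightarrow> regular k (Rp k d X p q)"
proof (induction X arbitrary: p q rule: finite_induct)
  case empty
  have "regular k (\<Union>a\<in>{a. a < k \<and> d p a = q}. {[a]})"
    by (rule regular_Union) (auto intro: reg_letter)
  then show ?case unfolding Rp_empty
    using reg_union[OF reg_eps] by (cases "p = q") auto
next
  case (insert r X)
  show ?case unfolding Rp_insert[OF insert(2)]
    by (rule reg_union[OF insert.IH reg_conc[OF insert.IH reg_conc[OF reg_star[OF insert.IH] insert.IH]]])
qed


definition cl :: "nat \<Rightarrow> nat \<Rightarrow> nat \<Rightarrow> nat" where
  "cl T P x = (if x < T then x else T + (x - T) mod P)"

definition invar :: "nat \<Rightarrow> nat \<Rightarrow> nat \<Rightarrow> (nat \<Rightarrow> nat) set \<Rightarrow> bool" where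
  "invar k T P S \<longleftrightarrow> (\<forall>v\<in>Nk k. \<forall>w\<in>Nk k. (\<forall>i. cl T P (v i) = cl T P (w i)) \<longrightarrow> v \<in> S \<longrightarrow> w \<in> S)"

lemma cl_mono:
  assumes "T1 \<le> T" "P1 dvd P" "cl T P x = cl T P y"
  shows "cl T1 P1 x = cl T1 P1 y"
proof (cases "x < T")
  case True
  then have "y = x" using assms(3) unfolding cl_def by (auto split: if_splits)
  then show ?thesis by simp
next
  case False
  then have yT: "\<not> y < T" using assms(3) unfolding cl_def by (auto split: if_splits)
  have "(x - T) mod P = (y - T) mod P" using assms(3) False yT unfolding cl_def by auto
  then have "(x - T) mod P1 = (y - T) mod P1" using assms(2) by (metis mod_mod_cancel)
  then have "((x - T) + (T - T1)) mod P1 = ((y - T) + (T - T1)) mod P1" by (rule mod_add_cong) simp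
  moreover have "(x - T) + (T - T1) = x - T1" "(y - T) + (T - T1) = y - T1"
    using False yT assms(1) by auto
  ultimately show ?thesis using False yT assms(1) unfolding cl_def by auto
qed

lemma invar_mono:
  assumes "invar k T1 P1 S" "T1 \<le> T" "P1 dvd P"
  shows "invar k T P S"
  using assms cl_mono unfolding invar_def by blast

lemma invar_compl:
  assumes "invar k T P S" shows "invar k T P (Nk k - S)"
  using assms unfolding invar_def by (metis Diff_iff)

lemma invar_un:
  assumes "invar k T P S" "invar k T P S'" shows "invar k T P (S \<union> S')"
  using assms unfolding invar_def by blast

lemma invar_int:
  assumes "invar k T P S" "invar k T P S'" shows "invar k T P (S \<inter> S')"
  using assms unfolding invar_def by blast

lemma prim_dir:
  assumes "primary k b" "b j \<noteq> 0"
  shows "j < k" "\<And>i. i \<noteq> j \<Longrightarrow> b i = 0"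
  using assms unfolding primary_def unitvec_def by (auto split: if_splits)

lemma dir_uniq:
  assumes fb: "free_basis B" and pr: "\<forall>b\<in>B. primary k b"
    and b: "b \<in> B" "b' \<in> B" "b j \<noteq> 0" "b' j \<noteq> 0"
  shows "b = b'"
proof (rule ccontr)
  assume ne: "b \<noteq> b'"
  have fin: "finite B" using fb unfolding free_basis_def by auto
  obtain n j1 where n: "n > 0" "b = (\<lambda>i. n * unitvec j1 i)" using pr b unfolding primary_def by blast
  obtain m j2 where m: "m > 0" "b' = (\<lambda>i. m * unitvec j2 i)" using pr b unfolding primary_def by blast
  have j1: "j1 = j" using n b(3) unfolding unitvec_def by (auto split: if_splits)
  have j2: "j2 = j" using m b(4) unfolding unitvec_def by (auto split: if_splits)
  define c where "c = (\<lambda>x. if x = b then m else 0)"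
  define c' where "c' = (\<lambda>x. if x = b' then n else 0)"
  have "lincomb c B = (\<lambda>i. m * b i)"
  proof
    fix i
    have "lincomb c B i = (\<Sum>x\<in>B. if x = b then m * b i else 0)"
      unfolding lincomb_def c_def by (rule sum.cong) auto
    also have "\<dots> = m * b i" using fin b(1) by (simp add: sum.delta)
    finally show "lincomb c B i = m * b i" .
  qed
  moreover have "lincomb c' B = (\<lambda>i. n * b' i)"
  proof
    fix i
    have "lincomb c' B i = (\<Sum>x\<in>B. if x = b' then n * b' i else 0)"
      unfolding lincomb_def c'_def by (rule sum.cong) auto
    also have "\<dots> = n * b' i" using fin b(2) by (simp add: sum.delta)
    finally show "lincomb c' B i = n * b' i" .
  qed
  moreover have "(\<lambda>i. m * b i) = (\<lambda>i. n * b' i)" using n m j1 j2 by auto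
  ultimately have "lincomb c B = lincomb c' B" by simp
  then have "c b = c' b" using fb b(1) unfolding free_basis_def by blast
  then show False using ne m(1) unfolding c_def c'_def by simp
qed

definition NB :: "(nat \<Rightarrow> nat) set \<Rightarrow> nat \<Rightarrow> nat" where
  "NB B j = (\<Sum>b\<in>B. b j)"

lemma lincomb_at:
  assumes fb: "free_basis B" and pr: "\<forall>b\<in>B. primary k b"
    and b0: "b0 \<in> B" "b0 j \<noteq> 0"
  shows "lincomb c B j = c b0 * b0 j" "NB B j = b0 j"
proof -
  have fin: "finite B" using fb unfolding free_basis_def by auto
  have u: "\<And>b. b \<in> B \<Longrightarrow> b j \<noteq> 0 \<Longrightarrow> b = b0" using dir_uniq[OF fb pr] b0 by blast
  have "lincomb c B j = (\<Sum>b\<in>B. if b = b0 then c b0 * b0 j else 0)"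
    unfolding lincomb_def by (rule sum.cong) (auto dest: u)
  also have "\<dots> = c b0 * b0 j" using fin b0 by (simp add: sum.delta)
  finally show "lincomb c B j = c b0 * b0 j" .
  have "NB B j = (\<Sum>b\<in>B. if b = b0 then b0 j else 0)"
    unfolding NB_def by (rule sum.cong) (auto dest: u)
  also have "\<dots> = b0 j" using fin b0 by (simp add: sum.delta)
  finally show "NB B j = b0 j" .
qed

lemma lincomb_none:
  assumes "\<forall>b\<in>B. b j = 0"
  shows "lincomb c B j = 0 \<and> NB B j = 0"
  using assms unfolding lincomb_def NB_def by (auto intro!: sum.neutral)

lemma span_char:
  assumes fb: "free_basis B" and pr: "\<forall>b\<in>B. primary k b"
  shows "\<sigma> \<in> span_N B \<longleftrightarrow> (\<forall>j. NB B j dvd \<sigma> j)"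
proof
  assume "\<sigma> \<in> span_N B"
  then obtain c where c: "\<sigma> = lincomb c B" unfolding span_N_def by blast
  show "\<forall>j. NB B j dvd \<sigma> j"
  proof
    fix j
    show "NB B j dvd \<sigma> j"
    proof (cases "\<exists>b0\<in>B. b0 j \<noteq> 0")
      case True
      then obtain b0 where "b0 \<in> B" "b0 j \<noteq> 0" by blast
      from lincomb_at[OF fb pr this] show ?thesis using c by simp
    next
      case False
      then show ?thesis using lincomb_none[where B=B and j=j and c=c] c by simp
    qed
  qed
next
  assume dv: "\<forall>j. NB B j dvd \<sigma> j"
  define dir where "dir b = (SOME j. b j \<noteq> 0)" for b :: "nat \<Rightarrow> nat"
  define c where "c b = \<sigma> (dir b) div b (dir b)" for b
  have "lincomb c B = \<sigma>"
  proof
    fix j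
    show "lincomb c B j = \<sigma> j"
    proof (cases "\<exists>b0\<in>B. b0 j \<noteq> 0")
      case True
      then obtain b0 where b0: "b0 \<in> B" "b0 j \<noteq> 0" by blast
      have "dir b0 = j" unfolding dir_def
      proof (rule some_equality)
        show "b0 j \<noteq> 0" using b0 by simp
        fix i assume "b0 i \<noteq> 0"
        then show "i = j" using prim_dir(2)[of k b0 i j] pr b0 by auto
      qed
      then have "lincomb c B j = \<sigma> j div b0 j * b0 j"
        using lincomb_at[OF fb pr b0] c_def by simp
      also have "\<dots> = \<sigma> j" using dv lincomb_at(2)[OF fb pr b0] by (metis dvd_div_mult_self)
      finally show ?thesis .
    next
      case False
      then have "lincomb c B j = 0" "NB B j = 0" using lincomb_none[where B=B and j=j and c=c] by auto
      moreover have "NB B j dvd \<sigma> j" using dv by blast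
      ultimately show ?thesis by simp
    qed
  qed
  then show "\<sigma> \<in> span_N B" unfolding span_N_def by blast
qed

lemma coord:
  assumes "g < T" "N = 0 \<or> N dvd P" "cl T P (g + s) = cl T P y" "N dvd s"
  shows "g \<le> y \<and> N dvd (y - g)"
proof (cases "g + s < T")
  case True
  then have "y = g + s" using assms(3) unfolding cl_def by (auto split: if_splits)
  then show ?thesis using assms(4) by simp
next
  case False
  then have yT: "\<not> y < T" using assms(3) unfolding cl_def by (auto split: if_splits)
  have "N \<noteq> 0" using False assms(1,4) by (cases "N = 0") auto
  then have NP: "N dvd P" using assms(2) by auto
  have "(g + s - T) mod P = (y - T) mod P" using assms(3) False yT unfolding cl_def by auto
  then have "(g + s - T) mod N = (y - T) mod N" using NP by (metis mod_mod_cancel)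
  then have "((g + s - T) + (T - g)) mod N = ((y - T) + (T - g)) mod N" by (rule mod_add_cong) simp
  moreover have "(g + s - T) + (T - g) = s" "(y - T) + (T - g) = y - g"
    using False yT assms(1) by auto
  ultimately have "(y - g) mod N = s mod N" by simp
  moreover have "s mod N = 0" using assms(4) by simp
  ultimately have "N dvd (y - g)" by (simp add: dvd_eq_mod_eq_0)
  moreover have "g \<le> y" using yT assms(1) by simp
  ultimately show ?thesis by blast
qed

lemma invar_atom:
  assumes g: "\<gamma> \<in> Nk k" and fb: "free_basis B" and pr: "\<forall>b\<in>B. primary k b"
  shows "\<exists>T P. 0 < P \<and> invar k T P (rsem k (Atom \<gamma> B))"
proof -
  define T where "T = Suc (\<Sum>j<k. \<gamma> j)"
  define P where "P = (\<Prod>j<k. max 1 (NB B j))"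
  have P0: "0 < P" unfolding P_def by (intro prod_pos) auto
  have gT: "\<gamma> j < T" for j
  proof (cases "j < k")
    case True
    then have "\<gamma> j \<le> (\<Sum>j<k. \<gamma> j)" by (intro member_le_sum) auto
    then show ?thesis unfolding T_def by simp
  next
    case False then show ?thesis using g unfolding Nk_def T_def by auto
  qed
  have NP: "NB B j = 0 \<or> NB B j dvd P" for j
  proof (cases "\<exists>b0\<in>B. b0 j \<noteq> 0")
    case True
    then obtain b0 where b0: "b0 \<in> B" "b0 j \<noteq> 0" by blast
    have "j < k" using prim_dir(1)[of k b0 j] pr b0 by auto
    have "max 1 (NB B j) dvd P" unfolding P_def by (rule dvd_prodI) (use \<open>j < k\<close> in auto)
    then show ?thesis using lincomb_at(2)[OF fb pr b0] b0 by (auto simp: max_def split: if_splits)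
  next
    case False then show ?thesis using lincomb_none[where B=B and j=j and c="\<lambda>_. 0"] by simp
  qed
  have "invar k T P (rsem k (Atom \<gamma> B))"
    unfolding invar_def
  proof (intro ballI impI)
    fix v w assume v: "v \<in> Nk k" and w: "w \<in> Nk k" and cls: "\<forall>i. cl T P (v i) = cl T P (w i)"
      and vin: "v \<in> rsem k (Atom \<gamma> B)"
    then obtain \<sigma> where s: "v = (\<lambda>i. \<gamma> i + \<sigma> i)" "\<sigma> \<in> span_N B" by auto
    have dv: "\<forall>j. NB B j dvd \<sigma> j" using s(2) span_char[OF fb pr] by blast
    have c: "\<gamma> j \<le> w j \<and> NB B j dvd (w j - \<gamma> j)" for j
      using coord[OF gT NP, of j "\<sigma> j" "w j"] cls s(1) dv by auto
    define \<sigma>' where "\<sigma>' = (\<lambda>j. w j - \<gamma> j)"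
    have "\<sigma>' \<in> span_N B" using span_char[OF fb pr] c unfolding \<sigma>'_def by blast
    moreover have "w = (\<lambda>i. \<gamma> i + \<sigma>' i)" using c unfolding \<sigma>'_def by auto
    ultimately show "w \<in> rsem k (Atom \<gamma> B)" by auto
  qed
  then show ?thesis using P0 by blast
qed

lemma invar_resimple:
  "resimple k E \<Longrightarrow> \<exists>T P. 0 < P \<and> invar k T P (rsem k E)"
proof (induction E)
  case (Atom \<gamma> B)
  then show ?case using invar_atom by simp
next
  case (RUn E F)
  have "resimple k E" "resimple k F" using RUn.prems by simp_all
  then obtain T1 P1 T2 P2 where h: "0 < P1" "invar k T1 P1 (rsem k E)" "0 < P2" "invar k T2 P2 (rsem k F)"
    using RUn.IH by blast
  have "invar k (max T1 T2) (P1 * P2) (rsem k E)" by (rule invar_mono[OF h(2)]) auto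
  moreover have "invar k (max T1 T2) (P1 * P2) (rsem k F)" by (rule invar_mono[OF h(4)]) auto
  ultimately have "invar k (max T1 T2) (P1 * P2) (rsem k (RUn E F))" using invar_un by simp
  moreover have "0 < P1 * P2" using h by simp
  ultimately show ?case by blast
next
  case (RInt E F)
  have "resimple k E" "resimple k F" using RInt.prems by simp_all
  then obtain T1 P1 T2 P2 where h: "0 < P1" "invar k T1 P1 (rsem k E)" "0 < P2" "invar k T2 P2 (rsem k F)"
    using RInt.IH by blast
  have "invar k (max T1 T2) (P1 * P2) (rsem k E)" by (rule invar_mono[OF h(2)]) auto
  moreover have "invar k (max T1 T2) (P1 * P2) (rsem k F)" by (rule invar_mono[OF h(4)]) auto
  ultimately have "invar k (max T1 T2) (P1 * P2) (rsem k (RInt E F))" using invar_int by simp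
  moreover have "0 < P1 * P2" using h by simp
  ultimately show ?case by blast
next
  case (RCompl E)
  then obtain T P where "0 < P" "invar k T P (rsem k E)" by auto
  then have "0 < P" "invar k T P (rsem k (RCompl E))" using invar_compl by auto
  then show ?case by blast
qed


lemma cl_Suc: "cl T P (Suc (cl T P x)) = cl T P (Suc x)"
proof (cases "x < T")
  case True then show ?thesis unfolding cl_def by simp
next
  case False
  then have "cl T P x = T + (x - T) mod P" unfolding cl_def by simp
  moreover have "Suc (T + (x - T) mod P) - T = Suc ((x - T) mod P)" by simp
  moreover have "Suc x - T = Suc (x - T)" using False by simp
  ultimately show ?thesis using False unfolding cl_def by (simp add: mod_Suc_eq)
qed

lemma cl_less: "0 < P \<Longrightarrow> cl T P x < T + P"
  unfolding cl_def by auto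

definition st :: "nat \<Rightarrow> nat \<Rightarrow> nat \<Rightarrow> nat list \<Rightarrow> nat list" where
  "st k T P w = map (\<lambda>i. cl T P (count_list w i)) [0..<k]"

definition dd :: "nat \<Rightarrow> nat \<Rightarrow> nat list \<Rightarrow> nat \<Rightarrow> nat list" where
  "dd T P s a = s[a := cl T P (Suc (s ! a))]"

lemma foldl_dd: "foldl (dd T P) (st k T P []) w = st k T P w"
proof (induction w rule: rev_induct)
  case Nil then show ?case by simp
next
  case (snoc a w)
  have "dd T P (st k T P w) a = st k T P (w @ [a])"
  proof (rule nth_equalityI)
    show "length (dd T P (st k T P w) a) = length (st k T P (w @ [a]))"
      unfolding dd_def st_def by simp
    fix i assume "i < length (dd T P (st k T P w) a)"
    then have i: "i < k" unfolding dd_def st_def by simp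
    show "dd T P (st k T P w) a ! i = st k T P (w @ [a]) ! i"
      using i unfolding dd_def st_def by (auto simp: nth_list_update cl_Suc)
  qed
  then show ?case using snoc by simp
qed

lemma parikh_Nk: "parikh k w \<in> Nk k"
  unfolding parikh_def Nk_def by auto

theorem main_aux:
  fixes k :: nat and S :: "(nat \<Rightarrow> nat) set"
  assumes sub: "S \<subseteq> Nk k" and P0: "0 < P" and inv: "invar k T P S"
  shows "recognizable k S"
proof -
  define Q where "Q = {s. set s \<subseteq> {..<T + P} \<and> length s = k}"
  have finQ: "finite Q" unfolding Q_def by (rule finite_lists_length_eq) simp
  define Acc where "Acc = {q \<in> Q. \<exists>v\<in>S. map (\<lambda>i. cl T P (v i)) [0..<k] = q}"
  have finA: "finite Acc" unfolding Acc_def using finQ by simp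
  define s0 where "s0 = st k T P []"
  have stQ: "st k T P w \<in> Q" for w
    unfolding Q_def st_def using cl_less[OF P0] by auto
  have Rp_eq: "Rp k (dd T P) Q s0 q = {w \<in> lists {..<k}. st k T P w = q}" for q
    unfolding Rp_def s0_def foldl_dd using stQ by blast
  have mem: "parikh k w \<in> S \<longleftrightarrow> st k T P w \<in> Acc" if w: "w \<in> lists {..<k}" for w
  proof
    assume "parikh k w \<in> S"
    moreover have "map (\<lambda>i. cl T P (parikh k w i)) [0..<k] = st k T P w"
      unfolding st_def parikh_def by simp
    ultimately show "st k T P w \<in> Acc" unfolding Acc_def using stQ by blast
  next
    assume "st k T P w \<in> Acc"
    then obtain v where v: "v \<in> S" "map (\<lambda>i. cl T P (v i)) [0..<k] = st k T P w"
      unfolding Acc_def by blast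
    have vN: "v \<in> Nk k" using v(1) sub by blast
    have "cl T P (v i) = cl T P (parikh k w i)" for i
    proof (cases "i < k")
      case True
      have "map (\<lambda>i. cl T P (v i)) [0..<k] ! i = st k T P w ! i" using v(2) by simp
      then show ?thesis using True unfolding st_def parikh_def by simp
    next
      case False
      then show ?thesis using vN unfolding Nk_def parikh_def by simp
    qed
    then show "parikh k w \<in> S" using inv vN parikh_Nk v(1) unfolding invar_def by blast
  qed
  have "{w \<in> lists {..<k}. parikh k w \<in> S} = (\<Union>q\<in>Acc. Rp k (dd T P) Q s0 q)"
    unfolding Rp_eq using mem by blast
  moreover have "regular k (\<Union>q\<in>Acc. Rp k (dd T P) Q s0 q)"
    by (rule regular_Union) (use finA Rp_regular[OF finQ] in auto)
  ultimately show ?thesis unfolding recognizable_def by simp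
qed

theorem mainTheorem6:
  fixes k :: nat and S :: "(nat \<Rightarrow> nat) set"
  assumes "S \<subseteq> Nk k"
    and "\<exists>E. resimple k E \<and> rsem k E = S"
  shows "recognizable k S"
proof -
  obtain E where E: "resimple k E" "rsem k E = S" using assms(2) by blast
  obtain T P where "0 < P" "invar k T P (rsem k E)" using invar_resimple[OF E(1)] by blast
  then show ?thesis using main_aux[OF assms(1)] E(2) by blast
qed

end
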